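(* Let $k\geq2$ be even, $n>2\ell'_k$, and $p\in\{0,1,2\}^{[\![1,n]\!]^2}$. Let $K^A(p,\ell'_k)=\{v\in J^A(p,\ell'_k):p(v)=0\}$ and $K^B(p,\ell'_k)=\{v\in J^B(p,\ell'_k):p(v)=0\}$. Then (1) $\mathrm{card}(K^B(p,\ell'_k))\leq(1-N_{k-1}^{-1})^{-1}\,\mathrm{card}(J^B(p,\ell'_k))\,f^B_{k-1}$; (2) $\mathrm{card}(K^A(p,\ell'_k))\leq\frac{2}{N'_k}\,\mathrm{card}(J^A(p,\ell'_k))\,f^A_{k-1}$.
   Context: Alphabet $\{0,1,2\}$. Let $(N_k)_{k\geq1}$ be integers with $N_k\geq4$, $\ell_0=2$, $\ell_k=N_k\ell_{k-1}$; let $N'_k\geq2$ be integers dividing $N_k$ with $N_k/N'_k\geq2$, and $\ell'_k=N'_k\ell_{k-1}$. Words: $a_0=01$, $b_0=02$; for odd $k\geq1$, $a_k=(a_{k-1})^{N_k}$ and $b_k=b_{k-1}2^{(N_k-2)\ell_{k-1}}b_{k-1}$; for even $k\geq2$, $a_k=a_{k-1}1^{(N_k-2)\ell_{k-1}}a_{k-1}$ and $b_k=(b_{k-1})^{N_k}$. $f^A_k$ (resp. $f^B_k$) is the number of occurrences of the symbol $0$ in $a_k$ (resp. $b_k$) divided by $\ell_k$. For even $k$: $\widetilde A'_k=\{a_{k-1}1^{(N'_k-1)\ell_{k-1}},\,1^{(N'_k-1)\ell_{k-1}}a_{k-1},\,1^{\ell'_k}\}$ and $\widetilde B'_k=\{(b_{k-1})^{N'_k},2^{\ell'_k}\}$.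 $\widetilde{\widetilde A}'_k$ (resp. $\widetilde{\widetilde B}'_k$) is the set of patterns $q\in\{0,1,2\}^{[\![1,\ell'_k]\!]^2}$ with $q(i,j)=\widetilde q(i)$ for all $(i,j)$, for some $\widetilde q\in\widetilde A'_k$ (resp. $\widetilde B'_k$). With $\sigma^u(p)(v)=p(u+v)$: $I^A(p,\ell'_k)=\{u\in[\![0,n-\ell'_k]\!]^2:(\sigma^up)|_{[\![1,\ell'_k]\!]^2}\in\widetilde{\widetilde A}'_k\}$, $J^A(p,\ell'_k)=\bigcup_{u\in I^A(p,\ell'_k)}(u+[\![1,\ell'_k]\!]^2)$, and $I^B,J^B$ analogously with $\widetilde{\widetilde B}'_k$. *)

theory Defs
  imports Complex_Main
begin

text \<open>Words over the alphabet {0,1,2} are lists of naturals; patterns on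
  [1,n]^2 are functions nat \<times> nat \<Rightarrow> nat (only values on the square matter).\<close>

fun ell :: "(nat \<Rightarrow> nat) \<Rightarrow> nat \<Rightarrow> nat" where
  "ell N 0 = 2"
| "ell N (Suc k) = N (Suc k) * ell N k"

definition ell' :: "(nat \<Rightarrow> nat) \<Rightarrow> (nat \<Rightarrow> nat) \<Rightarrow> nat \<Rightarrow> nat" where
  "ell' N N' k = N' k * ell N (k - 1)"

fun ab :: "(nat \<Rightarrow> nat) \<Rightarrow> nat \<Rightarrow> nat list \<times> nat list" where
  "ab N 0 = ([0,1], [0,2])"
| "ab N (Suc k) =
     (let a = fst (ab N k); b = snd (ab N k) in
      if odd (Suc k)
      then (concat (replicate (N (Suc k)) a),
            b @ replicate ((N (Suc k) - 2) * ell N k) 2 @ b)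
      else (a @ replicate ((N (Suc k) - 2) * ell N k) 1 @ a,
            concat (replicate (N (Suc k)) b)))"

definition aw :: "(nat \<Rightarrow> nat) \<Rightarrow> nat \<Rightarrow> nat list" where
  "aw N k = fst (ab N k)"

definition bw :: "(nat \<Rightarrow> nat) \<Rightarrow> nat \<Rightarrow> nat list" where
  "bw N k = snd (ab N k)"

definition fA :: "(nat \<Rightarrow> nat) \<Rightarrow> nat \<Rightarrow> real" where
  "fA N k = real (count_list (aw N k) 0) / real (ell N k)"

definition fB :: "(nat \<Rightarrow> nat) \<Rightarrow> nat \<Rightarrow> real" where
  "fB N k = real (count_list (bw N k) 0) / real (ell N k)"

definition At' :: "(nat \<Rightarrow> nat) \<Rightarrow> (nat \<Rightarrow> nat) \<Rightarrow> nat \<Rightarrow> nat list set" where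
  "At' N N' k = {aw N (k-1) @ replicate ((N' k - 1) * ell N (k-1)) 1,
                 replicate ((N' k - 1) * ell N (k-1)) 1 @ aw N (k-1),
                 replicate (ell' N N' k) 1}"

definition Bt' :: "(nat \<Rightarrow> nat) \<Rightarrow> (nat \<Rightarrow> nat) \<Rightarrow> nat \<Rightarrow> nat list set" where
  "Bt' N N' k = {concat (replicate (N' k) (bw N (k-1))), replicate (ell' N N' k) 2}"

definition lift2 :: "nat list set \<Rightarrow> nat \<Rightarrow> ((nat \<times> nat) \<Rightarrow> nat) set" where
  "lift2 W L = {q. \<exists>w\<in>W. \<forall>i\<in>{1..L}. \<forall>j\<in>{1..L}. q (i,j) = w ! (i - 1)}"

definition Iset :: "((nat \<times> nat) \<Rightarrow> nat) set \<Rightarrow> nat \<Rightarrow> ((nat \<times> nat) \<Rightarrow> nat) \<Rightarrow> nat \<Rightarrow> (nat \<times> nat) set" where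
  "Iset Q n p L = {u \<in> {0..n-L} \<times> {0..n-L}.
      \<exists>q\<in>Q. \<forall>i\<in>{1..L}. \<forall>j\<in>{1..L}. p (fst u + i, snd u + j) = q (i,j)}"

definition Jset :: "((nat \<times> nat) \<Rightarrow> nat) set \<Rightarrow> nat \<Rightarrow> ((nat \<times> nat) \<Rightarrow> nat) \<Rightarrow> nat \<Rightarrow> (nat \<times> nat) set" where
  "Jset Q n p L = (\<Union>u\<in>Iset Q n p L. {(fst u + i, snd u + j) | i j. i \<in> {1..L} \<and> j \<in> {1..L}})"

definition JA where "JA N N' k n p = Jset (lift2 (At' N N' k) (ell' N N' k)) n p (ell' N N' k)"
definition JB where "JB N N' k n p = Jset (lift2 (Bt' N N' k) (ell' N N' k)) n p (ell' N N' k)"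

definition KA where "KA N N' k n p = {v \<in> JA N N' k n p. p v = 0}"
definition KB where "KB N N' k n p = {v \<in> JB N N' k n p. p v = 0}"

end

theory Submission
  imports Defs
begin

lemma ell_pos: assumes "\<forall>m\<ge>1. N m \<ge> (4::nat)" shows "ell N k > 0"
proof (induction k)
  case (Suc k)
  have "N (Suc k) \<ge> 4" using assms by simp
  then show ?case using Suc by simp
qed simp

lemma len_ab: assumes hN: "\<forall>m\<ge>1. N m \<ge> (4::nat)"
  shows "length (aw N k) = ell N k \<and> length (bw N k) = ell N k"
proof (induction k)
  case 0 then show ?case by (simp add: aw_def bw_def)
next
  case (Suc k)
  have N4: "N (Suc k) \<ge> 4" using hN by simp
  have e: "ell N k + ((N (Suc k) - 2) * ell N k + ell N k) = N (Suc k) * ell N k"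
  proof -
    have "N (Suc k) = (N (Suc k) - 2) + 2" using N4 by simp
    then show ?thesis by (metis add.assoc add.commute add_mult_distrib mult_2 nat_arith.rule0)
  qed
  show ?case using Suc e by (simp add: aw_def bw_def Let_def length_concat sum_list_replicate)
qed

lemma hd_b: assumes hN: "\<forall>m\<ge>1. N m \<ge> (4::nat)"
  shows "bw N k \<noteq> [] \<and> bw N k ! 0 = 0"
proof (induction k)
  case 0 then show ?case by (simp add: bw_def)
next
  case (Suc k)
  have N4: "N (Suc k) \<ge> 4" using hN by simp
  then obtain r where r: "N (Suc k) = Suc r" by (cases "N (Suc k)") auto
  show ?case using Suc r by (simp add: bw_def Let_def nth_append)
qed

lemma b_odd: "odd (Suc j) \<Longrightarrow> bw N (Suc j) = bw N j @ replicate ((N (Suc j) - 2) * ell N j) 2 @ bw N j"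
  by (simp add: bw_def Let_def)

lemma nth_concat_replicate:
  "i < length w \<Longrightarrow> j < n \<Longrightarrow> concat (replicate n w) ! (j * length w + i) = w ! i"
proof (induction n arbitrary: j)
  case 0 then show ?case by simp
next
  case (Suc n)
  show ?case
  proof (cases j)
    case 0 then show ?thesis using Suc by (simp add: nth_append)
  next
    case (Suc j')
    then show ?thesis using Suc.prems Suc.IH[of j'] by (simp add: nth_append add.assoc)
  qed
qed

lemma count_card: "count_list w a = card {i. i < length w \<and> w ! i = a}"
  by (simp add: count_list_eq_length_filter length_filter_conv_card eq_commute)

lemma occ_count:
  assumes "length w = L" "\<forall>i\<in>{1..L}. f (t+i) = w!(i-1)"
  shows "card ({x. f x = a} \<inter> {t+1..t+L}) = count_list w a"
proof -
  have "{x. f x = a} \<inter> {t+1..t+L} = (\<lambda>i. t+1+i) ` {i. i < length w \<and> w ! i = a}"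
  proof (intro equalityI subsetI)
    fix x assume x: "x \<in> {x. f x = a} \<inter> {t+1..t+L}"
    have xt: "x - t \<in> {1..L}" using x by auto
    have "f (t + (x - t)) = w ! (x - t - 1)" using assms(2) xt by blast
    then show "x \<in> (\<lambda>i. t+1+i) ` {i. i < length w \<and> w ! i = a}"
      using x assms(1) by (auto intro!: image_eqI[of _ _ "x - t - 1"])
  next
    fix x assume "x \<in> (\<lambda>i. t+1+i) ` {i. i < length w \<and> w ! i = a}"
    then obtain i where "i < L" "w ! i = a" "x = t+1+i" using assms(1) by auto
    then show "x \<in> {x. f x = a} \<inter> {t+1..t+L}" using assms(2)[rule_format, of "i+1"] by auto
  qed
  then show ?thesis by (simp add: card_image count_card inj_on_def)
qed

lemma mismatch:
  fixes beta :: "nat list"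
  assumes "length beta = l" "l > 0" "beta ! 0 = 0" "M \<ge> l" "0 < d" "d < l + M"
  defines "b \<equiv> beta @ replicate M 2 @ beta"
  shows "\<exists>i. i + d < length b \<and> b ! i \<noteq> b ! (i + d)"
proof (cases "d \<le> M")
  case True
  let ?i = "l + M - d"
  have "b ! ?i = 2" using True assms by (simp add: b_def nth_append)
  moreover have "b ! (?i + d) = 0" using True assms by (simp add: b_def nth_append)
  moreover have "?i + d < length b" using True assms by (simp add: b_def)
  ultimately show ?thesis by (metis zero_neq_numeral)
next
  case False
  have "b ! 0 = 0" using assms by (simp add: b_def nth_append)
  moreover have "b ! d = 2" using False assms by (simp add: b_def nth_append)
  moreover have "0 + d < length b" using assms by (simp add: b_def)
  ultimately show ?thesis by (metis zero_neq_numeral add_0)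
qed

lemma cover2:
  fixes S Z :: "nat set" and L c :: nat
  assumes "finite S" "L > 0" "\<forall>t\<in>S. card (Z \<inter> {t+1..t+L}) \<le> c"
  shows "L * card (Z \<inter> (\<Union>t\<in>S. {t+1..t+L})) \<le> 2*c*card (\<Union>t\<in>S. {t+1..t+L})"
  using assms
proof (induction "card S" arbitrary: S rule: less_induct)
  case less
  show ?case
  proof (cases "S = {}")
    case True then show ?thesis by simp
  next
    case False
    define s where "s = Max S"
    define T where "T = {t\<in>S. t + L \<le> s}"
    define R where "R = S - T"
    define m where "m = Min R"
    have sS: "s \<in> S" using False less.prems by (simp add: s_def)
    have sR: "s \<in> R" using sS \<open>L>0\<close> by (simp add: R_def T_def)
    have finR: "finite R" using less.prems(1) R_def by simp
    have mR: "m \<in> R" using finR sR m_def by (metis Min_in empty_iff)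
    have ms: "m \<le> s" using finR sR m_def by simp
    have mL: "s < m + L" using mR by (auto simp: R_def T_def)
    have TS: "T \<subset> S"
    proof -
      have "s \<notin> T" using \<open>L>0\<close> by (simp add: T_def)
      moreover have "T \<subseteq> S" by (auto simp: T_def)
      ultimately show ?thesis using sS by blast
    qed
    have cardT: "card T < card S" by (rule psubset_card_mono) (use TS less.prems(1) in auto)
    define UT where "UT = (\<Union>t\<in>T. {t+1..t+L})"
    define UR where "UR = (\<Union>t\<in>R. {t+1..t+L})"
    define U where "U = (\<Union>t\<in>S. {t+1..t+L})"
    have finT: "finite T" using less.prems(1) T_def by simp
    have IH: "L * card (Z \<inter> UT) \<le> 2*c*card UT"
      using less.hyps[OF cardT finT less.prems(2)] less.prems(3) by (auto simp: UT_def T_def)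
    have UU: "U = UT \<union> UR" by (auto simp: U_def UT_def UR_def R_def T_def)
    have Rsub: "UR \<subseteq> {m+1..m+L} \<union> {s+1..s+L}"
    proof
      fix x assume "x \<in> UR"
      then obtain t where t: "t \<in> R" "x \<in> {t+1..t+L}" by (auto simp: UR_def)
      have "m \<le> t" using t(1) finR m_def by simp
      moreover have "t \<le> s" using t(1) less.prems(1) by (auto simp: s_def R_def)
      ultimately show "x \<in> {m+1..m+L} \<union> {s+1..s+L}" using t mL by auto
    qed
    have mS: "m \<in> S" using mR R_def by simp
    have zR: "card (Z \<inter> UR) \<le> 2*c"
    proof -
      have "card (Z \<inter> UR) \<le> card (Z \<inter> {m+1..m+L} \<union> Z \<inter> {s+1..s+L})"
        by (rule card_mono) (use Rsub in auto)
      also have "\<dots> \<le> card (Z \<inter> {m+1..m+L}) + card (Z \<inter> {s+1..s+L})" by (rule card_Un_le)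
      also have "\<dots> \<le> 2*c"
      proof -
        have "card (Z \<inter> {m+1..m+L}) \<le> c" using less.prems(3) mS by blast
        moreover have "card (Z \<inter> {s+1..s+L}) \<le> c" using less.prems(3) sS by blast
        ultimately show ?thesis by linarith
      qed
      finally show ?thesis .
    qed
    have finUT: "finite UT" using finT by (simp add: UT_def)
    have finUR: "finite UR" using finR by (simp add: UR_def)
    have zU: "card (Z \<inter> U) \<le> card (Z \<inter> UT) + 2*c"
    proof -
      have "card (Z \<inter> U) \<le> card (Z \<inter> UT) + card (Z \<inter> UR)"
        unfolding UU Int_Un_distrib by (rule card_Un_le)
      then show ?thesis using zR by simp
    qed
    have UTs: "UT \<subseteq> {..s}" by (auto simp: UT_def T_def)
    have "UT \<union> {s+1..s+L} \<subseteq> U" using sS by (auto simp: U_def UT_def T_def)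
    then have "card (UT \<union> {s+1..s+L}) \<le> card U"
      by (rule card_mono[rotated]) (simp add: UU finUT finUR)
    moreover have "card (UT \<union> {s+1..s+L}) = card UT + L"
      using UTs finUT by (subst card_Un_disjoint) auto
    ultimately have cU: "card UT + L \<le> card U" by simp
    have "L * card (Z \<inter> U) \<le> L * card (Z \<inter> UT) + 2*c*L" using zU
      by (metis add_mult_distrib2 mult.commute mult_le_mono2)
    also have "\<dots> \<le> 2*c*card UT + 2*c*L" using IH by simp
    also have "\<dots> = 2*c*(card UT + L)" by (simp add: algebra_simps)
    also have "\<dots> \<le> 2*c*card U" using cU by simp
    finally show ?thesis by (simp add: U_def)
  qed
qed

lemma coverB:
  fixes S Z :: "nat set" and P g c :: nat
  assumes "finite S" "g \<le> P" "\<forall>t\<in>S. card (Z \<inter> {t+1..t+P}) \<le> c"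
    "\<forall>t\<in>S. \<forall>t'\<in>S. t < t' \<longrightarrow> t + (P - g) \<le> t'"
  shows "(P - g) * card (Z \<inter> (\<Union>t\<in>S. {t+1..t+P})) \<le> c*card (\<Union>t\<in>S. {t+1..t+P})"
  using assms
proof (induction "card S" arbitrary: S rule: less_induct)
  case less
  show ?case
  proof (cases "S = {}")
    case True then show ?thesis by simp
  next
    case False
    define s where "s = Max S"
    define T where "T = S - {s}"
    have sS: "s \<in> S" using False less.prems by (simp add: s_def)
    have cardT: "card T < card S" using sS less.prems(1) unfolding T_def by (metis card_Diff1_less)
    define UT where "UT = (\<Union>t\<in>T. {t+1..t+P})"
    define U where "U = (\<Union>t\<in>S. {t+1..t+P})"
    have finT: "finite T" using less.prems(1) T_def by simp
    have IH: "(P - g) * card (Z \<inter> UT) \<le> c*card UT"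
      using less.hyps[OF cardT finT less.prems(2)] less.prems(3,4) by (auto simp: UT_def T_def)
    have UU: "U = UT \<union> {s+1..s+P}" using sS by (auto simp: U_def UT_def T_def)
    have finUT: "finite UT" using finT by (simp add: UT_def)
    have zU: "card (Z \<inter> U) \<le> card (Z \<inter> UT) + c"
    proof -
      have "card (Z \<inter> U) \<le> card (Z \<inter> UT) + card (Z \<inter> {s+1..s+P})"
        unfolding UU Int_Un_distrib by (rule card_Un_le)
      then show ?thesis using less.prems(3) sS by fastforce
    qed
    have UTs: "UT \<subseteq> {..s+g}"
    proof
      fix x assume "x \<in> UT"
      then obtain t where t: "t \<in> T" "x \<in> {t+1..t+P}" by (auto simp: UT_def)
      have "t \<noteq> s" "t \<in> S" using t(1) by (auto simp: T_def)
      then have "t < s" using less.prems(1) s_def by (metis Max_ge order_le_neq_trans)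
      then have "t + (P - g) \<le> s" using less.prems(4) t(1) sS by (auto simp: T_def)
      then show "x \<in> {..s+g}" using t(2) less.prems(2) by auto
    qed
    have "UT \<union> {s+g+1..s+P} \<subseteq> U" using UU by auto
    then have "card (UT \<union> {s+g+1..s+P}) \<le> card U"
      by (rule card_mono[rotated]) (simp add: UU finUT)
    moreover have "card (UT \<union> {s+g+1..s+P}) = card UT + (P - g)"
      using UTs finUT less.prems(2) by (subst card_Un_disjoint) auto
    ultimately have cU: "card UT + (P - g) \<le> card U" by simp
    have "(P - g) * card (Z \<inter> U) \<le> (P - g) * card (Z \<inter> UT) + c*(P - g)" using zU
      by (metis add_mult_distrib2 mult.commute mult_le_mono2)
    also have "\<dots> \<le> c*card UT + c*(P - g)" using IH by simp
    also have "\<dots> = c*(card UT + (P - g))" by (simp add: algebra_simps)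
    also have "\<dots> \<le> c*card U" using cU by simp
    finally show ?thesis by (simp add: U_def)
  qed
qed

lemma card_slices:
  fixes X :: "(nat \<times> nat) set"
  assumes "finite X" "finite Y" "snd ` X \<subseteq> Y"
  shows "card X = (\<Sum>y\<in>Y. card {x. (x,y) \<in> X})"
proof -
  have X: "X = (\<Union>y\<in>Y. (\<lambda>x. (x,y)) ` {x. (x,y) \<in> X})" using assms(3) by force
  have fin: "finite {x. (x,y) \<in> X}" for y
    by (rule finite_subset[of _ "fst ` X"]) (use assms(1) in force)+
  have "card X = (\<Sum>y\<in>Y. card ((\<lambda>x. (x,y)) ` {x. (x,y) \<in> X}))"
    by (subst X, rule card_UN_disjoint) (use assms(2) fin in auto)
  also have "\<dots> = (\<Sum>y\<in>Y. card {x. (x,y) \<in> X})"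
    by (rule sum.cong) (auto simp: card_image inj_on_def)
  finally show ?thesis .
qed

lemma slice_union:
  fixes I :: "(nat \<times> nat) set" and L y :: nat
  shows
  "{x. (x,y) \<in> (\<Union>u\<in>I. {(fst u + i, snd u + j) | i j. i \<in> {1..L} \<and> j \<in> {1..L}})}
   = (\<Union>t\<in>{fst u |u. u \<in> I \<and> snd u < y \<and> y \<le> snd u + L}. {t+1..t+L})"
proof (intro equalityI subsetI)
  fix x assume "x \<in> {x. (x,y) \<in> (\<Union>u\<in>I. {(fst u + i, snd u + j) | i j. i \<in> {1..L} \<and> j \<in> {1..L}})}"
  then obtain u i j where u: "u \<in> I" "i \<in> {1..L}" "j \<in> {1..L}" "x = fst u + i" "y = snd u + j" by auto
  then have "fst u \<in> {fst u |u. u \<in> I \<and> snd u < y \<and> y \<le> snd u + L}"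
    unfolding mem_Collect_eq by (intro exI[of _ u]) auto
  then show "x \<in> (\<Union>t\<in>{fst u |u. u \<in> I \<and> snd u < y \<and> y \<le> snd u + L}. {t+1..t+L})"
    by (rule UN_I) (use u in auto)
next
  fix x assume "x \<in> (\<Union>t\<in>{fst u |u. u \<in> I \<and> snd u < y \<and> y \<le> snd u + L}. {t+1..t+L})"
  then obtain u where u: "u \<in> I" "snd u < y" "y \<le> snd u + L" "x \<in> {fst u+1..fst u+L}" by auto
  then have "(x,y) = (fst u + (x - fst u), snd u + (y - snd u))" "x - fst u \<in> {1..L}" "y - snd u \<in> {1..L}" by auto
  then show "x \<in> {x. (x,y) \<in> (\<Union>u\<in>I. {(fst u + i, snd u + j) | i j. i \<in> {1..L} \<and> j \<in> {1..L}})}"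
    using u(1) by blast
qed

lemma row_of_I:
  assumes "u \<in> Iset (lift2 W L) n p L" "snd u < y" "y \<le> snd u + L"
  shows "\<exists>w\<in>W. \<forall>i\<in>{1..L}. p (fst u + i, y) = w ! (i-1)"
proof -
  from assms(1) obtain q where q: "q \<in> lift2 W L"
    "\<forall>i\<in>{1..L}. \<forall>j\<in>{1..L}. p (fst u + i, snd u + j) = q (i,j)" by (auto simp: Iset_def)
  from q(1) obtain w where w: "w\<in>W" "\<forall>i\<in>{1..L}. \<forall>j\<in>{1..L}. q (i,j) = w!(i-1)"
    by (auto simp: lift2_def)
  have j: "y - snd u \<in> {1..L}" "snd u + (y - snd u) = y" using assms by auto
  show ?thesis
  proof (intro bexI[OF _ w(1)] ballI)
    fix i assume i: "i \<in> {1..L}"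
    have "p (fst u + i, snd u + (y - snd u)) = q (i, y - snd u)" using q(2) i j(1) by blast
    also have "\<dots> = w ! (i-1)" using w(2) i j(1) by blast
    finally show "p (fst u + i, y) = w ! (i-1)" using j(2) by simp
  qed
qed

lemma jset_sub:
  "(\<Union>u\<in>Iset Q n p L. {(fst u + i, snd u + j) | i j. i \<in> {1..L} \<and> j \<in> {1..L}}) \<subseteq> {0..n+L}\<times>{0..n+L}"
  by (auto simp: Iset_def)

lemma blocks:
  fixes S :: "nat set"
  assumes "P > 0"
  shows "(\<Union>t\<in>S. {t+1..t+m*P}) = (\<Union>t\<in>{t + j*P |t j. t\<in>S \<and> j<m}. {t+1..t+P})"
proof (intro equalityI subsetI)
  fix x assume "x \<in> (\<Union>t\<in>S. {t+1..t+m*P})"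
  then obtain t where t: "t \<in> S" "t+1 \<le> x" "x \<le> t + m*P" by auto
  define j where "j = (x - t - 1) div P"
  define r where "r = (x - t - 1) mod P"
  have e: "x - t - 1 = j*P + r" by (simp add: j_def r_def)
  have r: "r < P" using assms by (simp add: r_def)
  have "j*P < m*P" using e t by linarith
  then have jm: "j < m" by simp
  have "t + j*P \<in> {t + j*P |t j. t\<in>S \<and> j<m}" using t(1) jm by blast
  moreover have "x \<in> {t + j*P + 1..t + j*P + P}" using e r t by auto
  ultimately show "x \<in> (\<Union>t\<in>{t + j*P |t j. t\<in>S \<and> j<m}. {t+1..t+P})" by blast
next
  fix x assume "x \<in> (\<Union>t\<in>{t + j*P |t j. t\<in>S \<and> j<m}. {t+1..t+P})"
  then obtain t j where tj: "t \<in> S" "j < m" "x \<in> {t + j*P + 1..t + j*P + P}" by auto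
  have "j*P + P \<le> m*P" using tj(2)
    by (metis Suc_leI add.commute mult_Suc mult_le_mono1)
  then have "x \<in> {t+1..t+m*P}" using tj by auto
  then show "x \<in> (\<Union>t\<in>S. {t+1..t+m*P})" using tj(1) by blast
qed

lemma At_words:
  assumes hN: "\<forall>m\<ge>1. N m \<ge> (4::nat)" and h2: "N' k \<ge> 1"
  shows "\<forall>w\<in>At' N N' k. length w = ell' N N' k \<and> count_list w 0 \<le> count_list (aw N (k-1)) 0"
proof -
  have la: "length (aw N (k-1)) = ell N (k-1)" using len_ab[OF hN] by blast
  have e: "ell N (k-1) + (N' k - 1) * ell N (k-1) = N' k * ell N (k-1)"
  proof -
    have "N' k = (N' k - 1) + 1" using h2 by simp
    then show ?thesis by (metis add.commute mult.commute mult_Suc_right Suc_eq_plus1)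
  qed
  have c1: "count_list (replicate m (1::nat)) 0 = 0" for m by (simp add: count_list_0_iff)
  show ?thesis using la e c1 by (auto simp: At'_def ell'_def)
qed

lemma Bt_words:
  assumes hN: "\<forall>m\<ge>1. N m \<ge> (4::nat)"
  shows "\<forall>w\<in>Bt' N N' k. length w = ell' N N' k"
proof -
  have lb: "length (bw N (k-1)) = ell N (k-1)" using len_ab[OF hN] by blast
  show ?thesis using lb by (auto simp: Bt'_def ell'_def length_concat sum_list_replicate)
qed

lemma partA:
  fixes N N' :: "nat \<Rightarrow> nat" and k n :: nat and p :: "nat \<times> nat \<Rightarrow> nat"
  assumes hN: "\<forall>m\<ge>1. N m \<ge> 4" and h2: "N' k \<ge> 1"
  shows "ell' N N' k * card (KA N N' k n p) \<le> 2 * count_list (aw N (k-1)) 0 * card (JA N N' k n p)"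
proof -
  define L where "L = ell' N N' k"
  define c where "c = count_list (aw N (k-1)) 0"
  define I where "I = Iset (lift2 (At' N N' k) L) n p L"
  define J where "J = JA N N' k n p"
  define K where "K = KA N N' k n p"
  have Lpos: "L > 0" using ell_pos[OF hN] h2 by (simp add: L_def ell'_def)
  have J: "J = (\<Union>u\<in>I. {(fst u + i, snd u + j) | i j. i \<in> {1..L} \<and> j \<in> {1..L}})"
    by (simp add: J_def JA_def Jset_def I_def L_def)
  have JY: "J \<subseteq> {0..n+L}\<times>{0..n+L}" unfolding J I_def by (rule jset_sub)
  have finJ: "finite J" using JY finite_subset by blast
  have KJ: "K \<subseteq> J" by (auto simp: K_def KA_def J_def)
  have finK: "finite K" using KJ finJ finite_subset by blast
  have finI: "finite I" by (rule finite_subset[of _ "{0..n-L}\<times>{0..n-L}"]) (auto simp: I_def Iset_def)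
  have cJ: "card J = (\<Sum>y\<in>{0..n+L}. card {x. (x,y) \<in> J})"
    by (rule card_slices) (use finJ JY in auto)
  have cK: "card K = (\<Sum>y\<in>{0..n+L}. card {x. (x,y) \<in> K})"
    by (rule card_slices) (use finK KJ JY in auto)
  have slice: "L * card {x. (x,y) \<in> K} \<le> 2*c*card {x. (x,y) \<in> J}" for y
  proof -
    define S where "S = {fst u |u. u \<in> I \<and> snd u < y \<and> y \<le> snd u + L}"
    define Z where "Z = {x. p (x,y) = 0}"
    have sJ: "{x. (x,y) \<in> J} = (\<Union>t\<in>S. {t+1..t+L})" unfolding J S_def by (rule slice_union)
    have sK: "{x. (x,y) \<in> K} = Z \<inter> {x. (x,y) \<in> J}" by (auto simp: K_def KA_def J_def Z_def)
    have finS: "finite S" by (rule finite_subset[of _ "fst ` I"]) (use finI in \<open>force simp: S_def\<close>)+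
    have hyp: "\<forall>t\<in>S. card (Z \<inter> {t+1..t+L}) \<le> c"
    proof
      fix t assume "t \<in> S"
      then obtain u where u: "u \<in> I" "snd u < y" "y \<le> snd u + L" "t = fst u" by (auto simp: S_def)
      obtain w where w: "w \<in> At' N N' k" "\<forall>i\<in>{1..L}. p (fst u + i, y) = w ! (i-1)"
        using row_of_I[OF u(1)[unfolded I_def] u(2,3)] by blast
      have lw: "length w = L" "count_list w 0 \<le> c" using At_words[of N N' k, OF hN h2] w(1) by (auto simp: L_def c_def)
      have "card ({x. p (x,y) = 0} \<inter> {t+1..t+L}) = count_list w 0"
        by (rule occ_count) (use lw w(2) u(4) in auto)
      then show "card (Z \<inter> {t+1..t+L}) \<le> c" using lw by (simp add: Z_def)
    qed
    show ?thesis using cover2[OF finS Lpos hyp] sJ sK by simp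
  qed
  have "L * card K = (\<Sum>y\<in>{0..n+L}. L * card {x. (x,y) \<in> K})" by (simp add: cK sum_distrib_left)
  also have "\<dots> \<le> (\<Sum>y\<in>{0..n+L}. 2*c*card {x. (x,y) \<in> J})" by (rule sum_mono) (rule slice)
  also have "\<dots> = 2*c*card J" by (simp add: cJ sum_distrib_left)
  finally show ?thesis by (simp add: L_def c_def K_def J_def)
qed

lemma square_of_I:
  assumes "u \<in> Iset (lift2 W L) n p L"
  shows "\<exists>w\<in>W. \<forall>i\<in>{1..L}. \<forall>j\<in>{1..L}. p (fst u + i, snd u + j) = w ! (i-1)"
proof -
  from assms(1) obtain q where q: "q \<in> lift2 W L"
    "\<forall>i\<in>{1..L}. \<forall>j\<in>{1..L}. p (fst u + i, snd u + j) = q (i,j)" by (auto simp: Iset_def)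
  from q(1) obtain w where w: "w\<in>W" "\<forall>i\<in>{1..L}. \<forall>j\<in>{1..L}. q (i,j) = w!(i-1)"
    by (auto simp: lift2_def)
  show ?thesis using q(2) w by metis
qed

lemma partB:
  fixes N N' :: "nat \<Rightarrow> nat" and k n :: nat and p :: "nat \<times> nat \<Rightarrow> nat"
  assumes hN: "\<forall>m\<ge>1. N m \<ge> 4" and h2: "N' k \<ge> 1" and hk: "even k" "k \<ge> 2"
  shows "(ell N (k-1) - ell N (k-2)) * card (KB N N' k n p) \<le> count_list (bw N (k-1)) 0 * card (JB N N' k n p)"
proof -
  define L where "L = ell' N N' k"
  define P where "P = ell N (k-1)"
  define l where "l = ell N (k-2)"
  define b where "b = bw N (k-1)"
  define beta where "beta = bw N (k-2)"
  define M where "M = (N (k-1) - 2) * l"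
  define c where "c = count_list b 0"
  define Wb where "Wb = concat (replicate (N' k) b)"
  define I where "I = Iset (lift2 (Bt' N N' k) L) n p L"
  define Ib where "Ib = {u\<in>I. \<forall>i\<in>{1..L}. \<forall>j\<in>{1..L}. p (fst u + i, snd u + j) = Wb ! (i-1)}"
  define J where "J = JB N N' k n p"
  define K where "K = KB N N' k n p"
  define Ub where "Ub = (\<Union>u\<in>Ib. {(fst u + i, snd u + j) | i j. i \<in> {1..L} \<and> j \<in> {1..L}})"
  define Zb where "Zb = {v\<in>Ub. p v = 0}"
  have kk: "k - 1 = Suc (k-2)" "odd (Suc (k-2))" using hk by auto
  have bs: "b = beta @ replicate M 2 @ beta"
    unfolding b_def beta_def M_def l_def kk(1) using b_odd[OF kk(2)] by simp
  have lbeta: "length beta = l" using len_ab[OF hN] by (simp add: beta_def l_def)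
  have lpos: "l > 0" using ell_pos[OF hN] by (simp add: l_def)
  have b0: "beta ! 0 = 0" using hd_b[OF hN] by (simp add: beta_def)
  have N4: "N (k-1) \<ge> 4" using hN hk by simp
  have Ml: "M \<ge> l"
  proof -
    have "1 * l \<le> (N (k-1) - 2) * l" using N4 by (intro mult_le_mono1) simp
    then show ?thesis by (simp add: M_def)
  qed
  have lb: "length b = P" using len_ab[OF hN] by (simp add: b_def P_def)
  have Pl: "P = 2*l + M" using lb bs lbeta by simp
  have LP: "L = N' k * P" by (simp add: L_def P_def ell'_def)
  have Ppos: "P > 0" using Pl lpos by simp
  have lWb: "length Wb = L" by (simp add: Wb_def LP lb length_concat sum_list_replicate)
  have J: "J = (\<Union>u\<in>I. {(fst u + i, snd u + j) | i j. i \<in> {1..L} \<and> j \<in> {1..L}})"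
    by (simp add: J_def JB_def Jset_def I_def L_def)
  have JY: "J \<subseteq> {0..n+L}\<times>{0..n+L}" unfolding J I_def by (rule jset_sub)
  have finJ: "finite J" using JY finite_subset by blast
  have UbJ: "Ub \<subseteq> J" unfolding J Ub_def Ib_def by blast
  have finUb: "finite Ub" using UbJ finJ finite_subset by blast
  have ZU: "Zb \<subseteq> Ub" by (auto simp: Zb_def)
  have finZ: "finite Zb" using ZU finUb finite_subset by blast
  have ZJ: "Zb \<subseteq> {0..n+L}\<times>{0..n+L}" using ZU UbJ JY by blast
  have KZ: "K \<subseteq> Zb"
  proof
    fix v assume v: "v \<in> K"
    then have vJ: "v \<in> J" and pv: "p v = 0" by (auto simp: K_def KB_def J_def)
    then obtain u i j where u: "u \<in> I" "i \<in> {1..L}" "j \<in> {1..L}" "v = (fst u + i, snd u + j)"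
      unfolding J by blast
    obtain w where w: "w \<in> Bt' N N' k" "\<forall>i\<in>{1..L}. \<forall>j\<in>{1..L}. p (fst u + i, snd u + j) = w ! (i-1)"
      using square_of_I[OF u(1)[unfolded I_def]] by blast
    have "w \<noteq> replicate L 2"
    proof
      assume "w = replicate L 2"
      then have "p v = 2" using w(2) u(2-4) by auto
      then show False using pv by simp
    qed
    then have "w = Wb" using w(1) by (auto simp: Bt'_def Wb_def b_def L_def)
    then have "u \<in> Ib" using u(1) w(2) by (simp add: Ib_def)
    then have "v \<in> Ub" using u(2-4) unfolding Ub_def by blast
    then show "v \<in> Zb" using pv by (simp add: Zb_def)
  qed
  have finI: "finite I" by (rule finite_subset[of _ "{0..n-L}\<times>{0..n-L}"]) (auto simp: I_def Iset_def)
  have finIb: "finite Ib" using finI by (simp add: Ib_def)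
  have cU: "card Ub = (\<Sum>y\<in>{0..n+L}. card {x. (x,y) \<in> Ub})"
    by (rule card_slices) (use finUb UbJ JY in auto)
  have cZ: "card Zb = (\<Sum>y\<in>{0..n+L}. card {x. (x,y) \<in> Zb})"
    by (rule card_slices) (use finZ ZJ in force)+
  have slice: "(P - l) * card {x. (x,y) \<in> Zb} \<le> c*card {x. (x,y) \<in> Ub}" for y
  proof -
    define S where "S = {fst u |u. u \<in> Ib \<and> snd u < y \<and> y \<le> snd u + L}"
    define S' where "S' = {t + j*P |t j. t\<in>S \<and> j < N' k}"
    define Z where "Z = {x. p (x,y) = 0}"
    have sU: "{x. (x,y) \<in> Ub} = (\<Union>t\<in>S'. {t+1..t+P})"
      unfolding Ub_def S_def S'_def slice_union LP by (rule blocks[OF Ppos])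
    have sZ: "{x. (x,y) \<in> Zb} = Z \<inter> {x. (x,y) \<in> Ub}" by (auto simp: Zb_def Z_def)
    have finS: "finite S" by (rule finite_subset[of _ "fst ` Ib"]) (use finIb in \<open>force simp: S_def\<close>)+
    have finS': "finite S'"
    proof -
      have "S' = (\<lambda>(t,j). t + j*P) ` (S \<times> {..<N' k})" by (auto simp: S'_def)
      then show ?thesis using finS by simp
    qed
    have row: "\<forall>i\<in>{1..P}. p (t+i, y) = b ! (i-1)" if t: "t \<in> S'" for t
    proof
      fix i assume i: "i \<in> {1..P}"
      from t obtain u j where u: "u \<in> Ib" "snd u < y" "y \<le> snd u + L" "j < N' k" "t = fst u + j*P"
        by (auto simp: S'_def S_def)
      have "j*P + P \<le> N' k * P" using u(4) by (metis Suc_leI add.commute mult_Suc mult_le_mono1)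
      then have ii: "j*P + i \<in> {1..L}" using i LP by auto
      have jj: "y - snd u \<in> {1..L}" using u(2,3) by auto
      have "p (fst u + (j*P + i), snd u + (y - snd u)) = Wb ! (j*P + i - 1)"
        using u(1) ii jj by (simp add: Ib_def)
      moreover have "Wb ! (j*P + i - 1) = b ! (i-1)"
      proof -
        have "j*P + i - 1 = j * length b + (i-1)" using i lb by auto
        then show ?thesis unfolding Wb_def using nth_concat_replicate[of "i-1" b j "N' k"] i lb u(4) by auto
      qed
      moreover have "fst u + (j*P + i) = t + i" "snd u + (y - snd u) = y" using u(2,5) by auto
      ultimately show "p (t+i, y) = b ! (i-1)" by simp
    qed
    have hyp: "\<forall>t\<in>S'. card (Z \<inter> {t+1..t+P}) \<le> c"
    proof
      fix t assume t: "t \<in> S'"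
      have "card ({x. p (x,y) = 0} \<inter> {t+1..t+P}) = count_list b 0"
        by (rule occ_count) (use lb row[OF t] in auto)
      then show "card (Z \<inter> {t+1..t+P}) \<le> c" by (simp add: Z_def c_def)
    qed
    have sep: "\<forall>t\<in>S'. \<forall>t'\<in>S'. t < t' \<longrightarrow> t + (P - l) \<le> t'"
    proof (intro ballI impI)
      fix t t' assume t: "t \<in> S'" and t': "t' \<in> S'" and tt: "t < t'"
      show "t + (P - l) \<le> t'"
      proof (rule ccontr)
        assume "\<not> t + (P - l) \<le> t'"
        then have d: "0 < t' - t" "t' - t < l + M" using tt Pl by auto
        obtain i where i: "i + (t' - t) < length b" "b ! i \<noteq> b ! (i + (t' - t))"
          using mismatch[OF lbeta lpos b0 Ml d] bs by blast
        have "p (t + (i + (t'-t) + 1), y) = b ! (i + (t'-t))"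
          using row[OF t] i(1) lb by (metis add_diff_cancel_right' atLeastAtMost_iff le_add2 Suc_eq_plus1 Suc_leI)
        moreover have "p (t' + (i + 1), y) = b ! i"
          using row[OF t'] i(1) lb by (metis add_diff_cancel_right' atLeastAtMost_iff le_add2 Suc_eq_plus1 Suc_leI add_lessD1)
        moreover have "t + (i + (t'-t) + 1) = t' + (i + 1)" using tt by simp
        ultimately show False using i(2) by metis
      qed
    qed
    have "l \<le> P" using Pl by simp
    from coverB[OF finS' this hyp sep] show ?thesis using sU sZ by simp
  qed
  have "(P - l) * card Zb = (\<Sum>y\<in>{0..n+L}. (P - l) * card {x. (x,y) \<in> Zb})" by (simp add: cZ sum_distrib_left)
  also have "\<dots> \<le> (\<Sum>y\<in>{0..n+L}. c*card {x. (x,y) \<in> Ub})" by (rule sum_mono) (rule slice)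
  also have "\<dots> = c*card Ub" by (simp add: cU sum_distrib_left)
  finally have main: "(P - l) * card Zb \<le> c * card Ub" .
  have "card K \<le> card Zb" using KZ finZ by (rule card_mono[rotated])
  moreover have "card Ub \<le> card J" using UbJ finJ by (rule card_mono[rotated])
  ultimately have "(P - l) * card K \<le> c * card J" using main
    by (meson le_trans mult_le_mono2)
  then show ?thesis by (simp add: P_def l_def c_def b_def K_def J_def)
qed

theorem lemma3p6:
  fixes N N' :: "nat \<Rightarrow> nat" and k n :: nat and p :: "nat \<times> nat \<Rightarrow> nat"
  assumes hN: "\<forall>m\<ge>1. N m \<ge> 4"
    and hN'2: "\<forall>m\<ge>1. N' m \<ge> 2"
    and hdvd: "\<forall>m\<ge>1. N' m dvd N m"
    and hratio: "\<forall>m\<ge>1. N m div N' m \<ge> 2"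
    and hk: "even k" "k \<ge> 2"
    and hn: "n > 2 * ell' N N' k"
    and hp: "\<forall>v \<in> {1..n} \<times> {1..n}. p v \<in> {0,1,2}"
  shows "(real (card (KB N N' k n p))
           \<le> inverse (1 - 1 / real (N (k-1))) * real (card (JB N N' k n p)) * fB N (k-1))
         \<and> (real (card (KA N N' k n p))
           \<le> 2 / real (N' k) * real (card (JA N N' k n p)) * fA N (k-1))"
proof
  have "N' k \<ge> 2" using hN'2 hk by simp
  then have h2: "N' k \<ge> 1" by simp
  have kk: "k - 1 = Suc (k-2)" using hk by auto
  define l where "l = ell N (k-2)"
  define N1 where "N1 = N (k-1)"
  have N4: "N1 \<ge> 4" using hN hk by (simp add: N1_def)
  have lpos: "l > 0" using ell_pos[OF hN] by (simp add: l_def)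
  have eP: "ell N (k-1) = N1 * l" unfolding N1_def l_def kk by simp
  {
    define cK where "cK = card (KB N N' k n p)"
    define cJ where "cJ = card (JB N N' k n p)"
    define c where "c = count_list (bw N (k-1)) 0"
    have "(ell N (k-1) - ell N (k-2)) * cK \<le> c * cJ"
      using partB[of N N' k n p, OF hN h2 hk] by (simp add: cK_def cJ_def c_def)
    then have "(N1 * l - l) * cK \<le> c * cJ" unfolding eP l_def[symmetric] .
    then have "(N1 - 1) * l * cK \<le> c * cJ" by (simp add: diff_mult_distrib)
    then have "real ((N1 - 1) * l * cK) \<le> real (c * cJ)" by (rule of_nat_mono)
    then have r: "(real N1 - 1) * real l * real cK \<le> real c * real cJ" using N4 by (simp add: of_nat_diff)
    have pos: "(real N1 - 1) * real l > 0" using N4 lpos by simp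
    have eq: "inverse (1 - 1 / real N1) * real cJ * (real c / (real N1 * real l))
              = real c * real cJ / ((real N1 - 1) * real l)"
      using N4 lpos by (simp add: field_simps)
    have r2: "real cK \<le> real c * real cJ / ((real N1 - 1) * real l)"
      using r pos by (simp add: pos_le_divide_eq mult.commute)
    have fb: "fB N (k-1) = real c / (real N1 * real l)" unfolding fB_def eP c_def by simp
    have "real cK \<le> inverse (1 - 1 / real N1) * real cJ * fB N (k-1)" unfolding fb eq by (rule r2)
    then show "real (card (KB N N' k n p))
           \<le> inverse (1 - 1 / real (N (k-1))) * real (card (JB N N' k n p)) * fB N (k-1)"
      unfolding cK_def cJ_def N1_def .
  }
  {
    define cK where "cK = card (KA N N' k n p)"
    define cJ where "cJ = card (JA N N' k n p)"
    define c where "c = count_list (aw N (k-1)) 0"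
    define P where "P = ell N (k-1)"
    have Ppos: "P > 0" using ell_pos[OF hN] by (simp add: P_def)
    have "N' k * P * cK \<le> 2 * c * cJ"
      using partA[of N N' k n p, OF hN h2] by (simp add: cK_def cJ_def c_def ell'_def P_def)
    then have "real (N' k * P * cK) \<le> real (2 * c * cJ)" by (rule of_nat_mono)
    then have r: "real (N' k) * real P * real cK \<le> 2 * real c * real cJ" by simp
    have pos: "real (N' k) * real P > 0" using h2 Ppos by simp
    have eq: "2 / real (N' k) * real cJ * (real c / real P) = 2 * real c * real cJ / (real (N' k) * real P)"
      using h2 Ppos by (simp add: field_simps)
    have r2: "real cK \<le> 2 * real c * real cJ / (real (N' k) * real P)"
      using r pos by (simp add: pos_le_divide_eq mult.commute)
    have fa: "fA N (k-1) = real c / real P" unfolding fA_def c_def P_def by simp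
    have "real cK \<le> 2 / real (N' k) * real cJ * fA N (k-1)" unfolding fa eq by (rule r2)
    then show "real (card (KA N N' k n p))
           \<le> 2 / real (N' k) * real (card (JA N N' k n p)) * fA N (k-1)"
      unfolding cK_def cJ_def .
  }
qed

end
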